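(* Let $G$ be a subgroup of $\mathrm{GL}(d,\mathbb{R})$ and let $f\in\mathbb{R}[x_1,\dots,x_d]$ be a nonzero ordinary polynomial of total degree $n$. Then $R_G(f)$ is finite-dimensional and $$\sqrt[d]{\dim R_G(f)}-1\le n\le\dim R_G(f)-1.$$ Moreover, if $\dim R_G(f)=\binom{n+d}{d}$, then $n\le\sqrt[d]{d!\,\dim R_G(f)}-1$.
   Context: For $g\in C(\mathbb{R}^d)$, $h\in\mathbb{R}^d$, $P\in\mathrm{GL}(d,\mathbb{R})$: $\tau_hg(x)=g(x+h)$ and $O_Pg(x)=g(Px)$. $R_G(f)$ denotes the smallest vector subspace of $C(\mathbb{R}^d)$ containing $f$ and invariant under all $\tau_h$ ($h\in\mathbb{R}^d$) and all $O_P$ ($P\in G$). *)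

theory Defs
  imports "HOL-Analysis.Analysis" "HOL-Library.Function_Algebras"
begin

definition fscale :: "real \<Rightarrow> ('a \<Rightarrow> real) \<Rightarrow> ('a \<Rightarrow> real)" where
  "fscale c g = (\<lambda>x. c * g x)"

definition fsubspace :: "('a \<Rightarrow> real) set \<Rightarrow> bool" where
  "fsubspace V = module.subspace fscale V"

definition fspan :: "('a \<Rightarrow> real) set \<Rightarrow> ('a \<Rightarrow> real) set" where
  "fspan B = module.span fscale B"

definition fdim :: "('a \<Rightarrow> real) set \<Rightarrow> nat" where
  "fdim V = vector_space.dim fscale V"

definition tau :: "real^'n \<Rightarrow> (real^'n \<Rightarrow> real) \<Rightarrow> (real^'n \<Rightarrow> real)" where
  "tau h g = (\<lambda>x. g (x + h))"

definition OP :: "real^'n^'n \<Rightarrow> (real^'n \<Rightarrow> real) \<Rightarrow> (real^'n \<Rightarrow> real)" where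
  "OP P g = (\<lambda>x. g (P *v x))"

definition GL_subgroup :: "(real^'n^'n) set \<Rightarrow> bool" where
  "GL_subgroup G \<longleftrightarrow> (\<forall>P\<in>G. invertible P) \<and> mat 1 \<in> G
     \<and> (\<forall>P\<in>G. \<forall>Q\<in>G. P ** Q \<in> G) \<and> (\<forall>P\<in>G. matrix_inv P \<in> G)"

definition RG :: "(real^'n^'n) set \<Rightarrow> (real^'n \<Rightarrow> real) \<Rightarrow> (real^'n \<Rightarrow> real) set" where
  "RG G f = \<Inter>{V. V \<subseteq> {g. continuous_on UNIV g} \<and> fsubspace V \<and> f \<in> V
      \<and> (\<forall>h. \<forall>g\<in>V. tau h g \<in> V) \<and> (\<forall>P\<in>G. \<forall>g\<in>V. OP P g \<in> V)}"

text \<open>Polynomials in d variables, given by a finitely supported coefficient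
  function on exponent vectors alpha :: 'n => nat.\<close>

definition poly_coeffs :: "(('n \<Rightarrow> nat) \<Rightarrow> real) \<Rightarrow> bool" where
  "poly_coeffs c \<longleftrightarrow> finite {\<alpha>. c \<alpha> \<noteq> 0}"

definition poly_fun :: "(('n::finite \<Rightarrow> nat) \<Rightarrow> real) \<Rightarrow> real^'n \<Rightarrow> real" where
  "poly_fun c x = (\<Sum>\<alpha>\<in>{\<alpha>. c \<alpha> \<noteq> 0}. c \<alpha> * (\<Prod>i\<in>UNIV. (x $ i) ^ \<alpha> i))"

definition total_degree :: "(('n::finite \<Rightarrow> nat) \<Rightarrow> real) \<Rightarrow> nat" where
  "total_degree c = Max {(\<Sum>i\<in>UNIV. \<alpha> i) | \<alpha>. c \<alpha> \<noteq> 0}"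

end

theory Submission
  imports Defs "HOL-Computational_Algebra.Polynomial"
begin


lemma vs_fscale: "vector_space (fscale :: real \<Rightarrow> ('a \<Rightarrow> real) \<Rightarrow> 'a \<Rightarrow> real)"
  by unfold_locales (auto simp: fscale_def fun_eq_iff algebra_simps)

interpretation F: vector_space "fscale :: real \<Rightarrow> ('a \<Rightarrow> real) \<Rightarrow> 'a \<Rightarrow> real"
  by (rule vs_fscale)

lemma "F.span (B::(nat\<Rightarrow>real) set) = fspan B" by (simp add: fspan_def)

lemma sum_fun_apply: "(sum F A) x = (\<Sum>a\<in>A. F a x)"
  by (induct A rule: infinite_finite_induct) auto

lemma delta_deg:
  fixes q :: "real poly"
  assumes "degree q \<ge> 1"
  shows "degree (pcompose q [:1,1:] - q) = degree q - 1 \<and>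
         lead_coeff (pcompose q [:1,1:] - q) = of_nat (degree q) * lead_coeff q"
  using assms
proof (induction q)
  case 0
  then show ?case by simp
next
  case (pCons a r)
  have r0: "r \<noteq> 0" using pCons by auto
  have dq: "degree (pCons a r) = degree r + 1" using r0 by simp
  have eq: "pcompose (pCons a r) [:1,1:] - pCons a r
        = [:0,1:] * (pcompose r [:1,1:] - r) + pcompose r [:1,1:]"
  proof -
    have s: "[:1,1::real:] = [:0,1:] + 1" by (simp add: one_pCons)
    have p: "pCons a r = [:a:] + [:0,1:] * r"
      by (simp add: add_pCons)
    have c: "pcompose (pCons a r) [:1,1:] = [:a:] + ([:0,1:] + 1) * pcompose r [:1,1:]"
      using pcompose_pCons[of a r "[:1,1:]"] s by simp
    have ring: "\<And>A X C R::real poly. A + (X + 1) * C - (A + X * R) = X * (C - R) + C"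
      by (simp add: algebra_simps)
    show ?thesis unfolding c using ring[of "[:a:]" "[:0,1:]" "pcompose r [:1,1:]" r] p
      by metis

  qed
  show ?case
  proof (cases "degree r = 0")
    case True
    then obtain b where rb: "r = [:b:]" by (metis degree_eq_zeroE)
    show ?thesis unfolding eq using r0 by (simp add: rb)
  next
    case False
    let ?D = "pcompose r [:1,1:] - r"
    have IH: "degree ?D = degree r - 1" "lead_coeff ?D = of_nat (degree r) * lead_coeff r"
      using pCons.IH False r0 by auto
    have lr: "lead_coeff r \<noteq> 0" using r0 by simp
    have D0: "?D \<noteq> 0" using IH lr False by auto
    have dX: "degree ([:0,1:] * ?D) = degree r" using IH D0 False
      by (simp add: degree_mult_eq)
    have cX: "coeff ([:0,1:] * ?D) (degree r) = of_nat (degree r) * lead_coeff r"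
      using IH False by (cases "degree r") (simp_all add: coeff_pCons)
    have dC: "degree (pcompose r [:1,1:]) = degree r" by (simp add: degree_pcompose)
    have cC: "coeff (pcompose r [:1,1:]) (degree r) = lead_coeff r"
      using lead_coeff_comp[of "[:1,1::real:]" r] dC by simp
    let ?S = "[:0,1:] * ?D + pcompose r [:1,1:]"
    have cS: "coeff ?S (degree r) = of_nat (degree r + 1) * lead_coeff r"
      using cX cC by (simp add: algebra_simps)
    have cS0: "coeff ?S (degree r) \<noteq> 0" using cS lr by simp
    have "degree ?S \<le> degree r" using dX dC by (intro degree_add_le) auto
    moreover have "degree r \<le> degree ?S" using cS0 le_degree by blast
    ultimately have dS: "degree ?S = degree r" by simp
    show ?thesis unfolding eq dq using dS cS by simp
  qed
qed




lemma poly_ident: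
  fixes I :: "'n set" and c :: "('n \<Rightarrow> nat) \<Rightarrow> real"
  assumes "finite I"
  shows "finite S \<Longrightarrow> (\<forall>\<alpha>\<in>S. \<forall>i. i \<notin> I \<longrightarrow> \<alpha> i = 0)
    \<Longrightarrow> (\<forall>x::'n\<Rightarrow>real. (\<Sum>\<alpha>\<in>S. c \<alpha> * (\<Prod>i\<in>I. x i ^ \<alpha> i)) = 0) \<Longrightarrow> \<alpha> \<in> S \<Longrightarrow> c \<alpha> = 0"
  using assms
proof (induction I arbitrary: S c \<alpha> rule: finite_induct)
  case empty
  have z: "\<forall>\<beta>\<in>S. \<beta> = (\<lambda>_. 0)" using empty(2) by auto
  have "S = {\<alpha>}" using empty(4) z by (metis empty_iff insertI1 subsetI subset_antisym insertE)
  then show ?case using empty(3) by simp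
next
  case (insert j I)
  note fS = insert.prems(1)
  define e where "e = \<alpha> j"
  define E where "E = (\<lambda>\<beta>. \<beta> j) ` S"
  have fE: "finite E" using fS by (simp add: E_def)
  define A where "A x e' = (\<Sum>\<beta>\<in>{\<beta>\<in>S. \<beta> j = e'}. c \<beta> * (\<Prod>i\<in>I. x i ^ \<beta> i))" for x e'
  have Ae: "A x e = 0" for x
  proof -
    define P where "P = (\<Sum>e'\<in>E. monom (A x e') e')"
    have "poly P t = 0" for t
    proof -
      have "poly P t = (\<Sum>e'\<in>E. A x e' * t ^ e')" by (simp add: P_def poly_sum poly_monom)
      also have "\<dots> = (\<Sum>e'\<in>E. \<Sum>\<beta>\<in>{\<beta>\<in>S. \<beta> j = e'}. c \<beta> * (t ^ \<beta> j * (\<Prod>i\<in>I. x i ^ \<beta> i)))"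
        by (auto simp: A_def sum_distrib_left mult.left_commute mult.commute intro!: sum.cong)
      also have "\<dots> = (\<Sum>\<beta>\<in>S. c \<beta> * (t ^ \<beta> j * (\<Prod>i\<in>I. x i ^ \<beta> i)))"
        by (rule sum.group) (auto simp: fS fE E_def)
      also have "\<dots> = (\<Sum>\<beta>\<in>S. c \<beta> * (\<Prod>i\<in>insert j I. (x(j:=t)) i ^ \<beta> i))"
      proof (rule sum.cong[OF refl])
        fix \<beta> assume "\<beta> \<in> S"
        have "(\<Prod>i\<in>I. (x(j:=t)) i ^ \<beta> i) = (\<Prod>i\<in>I. x i ^ \<beta> i)"
          using insert.hyps by (intro prod.cong) auto
        then show "c \<beta> * (t ^ \<beta> j * (\<Prod>i\<in>I. x i ^ \<beta> i)) = c \<beta> * (\<Prod>i\<in>insert j I. (x(j:=t)) i ^ \<beta> i)"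
          using insert.hyps by simp
      qed
      also have "\<dots> = 0" using insert.prems(3) by blast
      finally show ?thesis .
    qed
    then have "P = 0" using poly_all_0_iff_0 by blast
    then have "coeff P e = 0" by simp
    moreover have "e \<in> E" using insert.prems(4) by (simp add: E_def e_def)
    moreover have "coeff P e = (\<Sum>e'\<in>E. if e' = e then A x e' else 0)"
      by (simp add: P_def coeff_sum)
    ultimately show ?thesis using fE by simp
  qed
  define S' where "S' = (\<lambda>\<beta>. \<beta>(j:=0)) ` {\<beta>\<in>S. \<beta> j = e}"
  define c' where "c' \<gamma> = c (\<gamma>(j:=e))" for \<gamma>
  have inj: "inj_on (\<lambda>\<beta>. \<beta>(j:=0)) {\<beta>\<in>S. \<beta> j = e}"
  proof (rule inj_onI)
    fix \<beta> \<gamma> assume "\<beta> \<in> {\<beta>\<in>S. \<beta> j = e}" "\<gamma> \<in> {\<beta>\<in>S. \<beta> j = e}" "\<beta>(j:=0) = \<gamma>(j:=0)"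
    then show "\<beta> = \<gamma>" by (auto simp: fun_eq_iff) (metis (mono_tags))
  qed
  have "c' (\<alpha>(j:=0)) = 0"
  proof (rule insert.IH)
    show "finite S'" using fS by (simp add: S'_def)
    show "\<forall>\<alpha>\<in>S'. \<forall>i. i \<notin> I \<longrightarrow> \<alpha> i = 0" using insert.prems(2) by (auto simp: S'_def)
    show "\<alpha>(j:=0) \<in> S'" using insert.prems(4) by (auto simp: S'_def e_def)
    show "\<forall>x::'n\<Rightarrow>real. (\<Sum>\<gamma>\<in>S'. c' \<gamma> * (\<Prod>i\<in>I. x i ^ \<gamma> i)) = 0"
    proof
      fix x :: "'n \<Rightarrow> real"
      have "(\<Sum>\<gamma>\<in>S'. c' \<gamma> * (\<Prod>i\<in>I. x i ^ \<gamma> i))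
         = (\<Sum>\<beta>\<in>{\<beta>\<in>S. \<beta> j = e}. c' (\<beta>(j:=0)) * (\<Prod>i\<in>I. x i ^ (\<beta>(j:=0)) i))"
        unfolding S'_def by (rule sum.reindex[OF inj, unfolded comp_def])
      also have "\<dots> = A x e" unfolding A_def
      proof (rule sum.cong[OF refl])
        fix \<beta> assume b: "\<beta> \<in> {\<beta>\<in>S. \<beta> j = e}"
        have "\<beta>(j:=0, j:=e) = \<beta>" using b by auto
        moreover have "(\<Prod>i\<in>I. x i ^ (\<beta>(j:=0)) i) = (\<Prod>i\<in>I. x i ^ \<beta> i)"
          using insert.hyps by (intro prod.cong) auto
        ultimately show "c' (\<beta>(j:=0)) * (\<Prod>i\<in>I. x i ^ (\<beta>(j:=0)) i) = c \<beta> * (\<Prod>i\<in>I. x i ^ \<beta> i)"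
          by (simp add: c'_def)
      qed
      also have "\<dots> = 0" by (rule Ae)
      finally show "(\<Sum>\<gamma>\<in>S'. c' \<gamma> * (\<Prod>i\<in>I. x i ^ \<gamma> i)) = 0" .
    qed
  qed
  then show ?case by (simp add: c'_def e_def)
qed

lemma uni_indep:
  fixes q :: "nat \<Rightarrow> real poly"
  assumes "finite K" "\<forall>k\<in>K. q k \<noteq> 0 \<and> degree (q k) = k"
    and "\<forall>s. (\<Sum>k\<in>K. a k * poly (q k) s) = 0"
  shows "\<forall>k\<in>K. a k = 0"
proof (rule ccontr)
  assume neg: "\<not> ?thesis"
  define K' where "K' = {k\<in>K. a k \<noteq> 0}"
  have K'ne: "K' \<noteq> {}" "finite K'" using neg assms(1) by (auto simp: K'_def)
  define m where "m = Max K'"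
  have m: "m \<in> K" "a m \<noteq> 0" using Max_in[OF K'ne(2,1)] by (auto simp: m_def K'_def)
  have mx: "k \<in> K \<Longrightarrow> a k \<noteq> 0 \<Longrightarrow> k \<le> m" for k using K'ne by (auto simp: m_def K'_def)
  define P where "P = (\<Sum>k\<in>K. smult (a k) (q k))"
  have "poly P s = 0" for s using assms(3) by (simp add: P_def poly_sum)
  then have "P = 0" using poly_all_0_iff_0 by blast
  then have "0 = coeff P m" by simp
  also have "\<dots> = (\<Sum>k\<in>K. a k * coeff (q k) m)" by (simp add: P_def coeff_sum)
  also have "\<dots> = a m * coeff (q m) m + (\<Sum>k\<in>K-{m}. a k * coeff (q k) m)"
    using m(1) assms(1) by (simp add: sum.remove)
  also have "(\<Sum>k\<in>K-{m}. a k * coeff (q k) m) = 0"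
  proof (rule sum.neutral, rule ballI)
    fix k assume k: "k \<in> K - {m}"
    show "a k * coeff (q k) m = 0"
    proof (cases "a k = 0")
      case False
      then have "k < m" using mx k by force
      then have "coeff (q k) m = 0" using assms(2) k by (intro coeff_eq_0) auto
      then show ?thesis by simp
    qed simp
  qed
  finally have "a m * coeff (q m) m = 0" by simp
  moreover have "coeff (q m) m \<noteq> 0" using assms(2) m(1) by (metis leading_coeff_0_iff)
  ultimately show False using m(2) by simp
qed




inductive pdeg :: "nat \<Rightarrow> (real^'n \<Rightarrow> real) \<Rightarrow> bool" where
  const: "pdeg k (\<lambda>x. a)"
| coord: "pdeg 1 (\<lambda>x. x $ i)"
| add: "pdeg k f \<Longrightarrow> pdeg k g \<Longrightarrow> pdeg k (\<lambda>x. f x + g x)"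
| mult: "pdeg a f \<Longrightarrow> pdeg b g \<Longrightarrow> pdeg (a + b) (\<lambda>x. f x * g x)"
| mono: "pdeg a f \<Longrightarrow> a \<le> b \<Longrightarrow> pdeg b f"

lemma pdeg_cont: "pdeg k f \<Longrightarrow> continuous_on UNIV f"
  by (induction rule: pdeg.induct) (auto intro!: continuous_intros)

lemma pdeg_sum: "finite A \<Longrightarrow> (\<forall>a\<in>A. pdeg k (f a)) \<Longrightarrow> pdeg k (\<lambda>x. \<Sum>a\<in>A. f a x)"
  by (induction A rule: finite_induct) (auto intro: pdeg.intros)

lemma pdeg_prod: "finite A \<Longrightarrow> (\<forall>a\<in>A. pdeg (d a) (f a)) \<Longrightarrow> pdeg (\<Sum>a\<in>A. d a) (\<lambda>x. \<Prod>a\<in>A. f a x)"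
  by (induction A rule: finite_induct) (auto intro: pdeg.intros)

lemma pdeg_pow: "pdeg k f \<Longrightarrow> pdeg (m * k) (\<lambda>x. f x ^ m)"
  by (induction m) (auto intro: pdeg.intros)

lemma pdeg_affine: "pdeg k f \<Longrightarrow> pdeg k (\<lambda>x. f (P *v x + h))"
proof (induction rule: pdeg.induct)
  case (coord i)
  have "pdeg 1 (\<lambda>x. \<Sum>j\<in>UNIV. P $ i $ j * x $ j)"
  proof (rule pdeg_sum)
    show "\<forall>j\<in>UNIV. pdeg 1 (\<lambda>x. P $ i $ j * x $ j)"
    proof
      fix j
      have "pdeg (0+1) (\<lambda>x. P $ i $ j * x $ j)" by (rule pdeg.mult) (rule pdeg.const, rule pdeg.coord)
      then show "pdeg 1 (\<lambda>x. P $ i $ j * x $ j)" by simp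
    qed
  qed simp
  then have "pdeg 1 (\<lambda>x. (\<Sum>j\<in>UNIV. P $ i $ j * x $ j) + h $ i)"
    by (auto intro: pdeg.intros)
  then show ?case by (simp add: matrix_vector_mult_def)
qed (auto intro: pdeg.intros)

definition mfun :: "('n::finite \<Rightarrow> nat) \<Rightarrow> real^'n \<Rightarrow> real" where
  "mfun \<alpha> = (\<lambda>x. \<Prod>i\<in>UNIV. (x $ i) ^ \<alpha> i)"

lemma pdeg_pow_coord: "pdeg m (\<lambda>x. x$i ^ m)"
  using pdeg_pow[OF pdeg.coord, of m] by simp

lemma pdeg_mono: "pdeg (sum \<alpha> UNIV) (mfun \<alpha>)"
proof -
  have "pdeg (\<Sum>i\<in>UNIV. \<alpha> i * 1) (\<lambda>x. \<Prod>i\<in>UNIV. (x $ i) ^ \<alpha> i)"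
    by (rule pdeg_prod) (simp_all add: pdeg_pow_coord)
  then show ?thesis by (simp add: mfun_def)
qed

definition MS :: "nat \<Rightarrow> (real^'n::finite \<Rightarrow> real) set" where
  "MS k = mfun ` {\<alpha>. sum \<alpha> UNIV \<le> k}"

lemma MS_mono: "a \<le> b \<Longrightarrow> MS a \<subseteq> MS b"
  by (auto simp: MS_def)

lemma mono_mult: "(\<lambda>x. mfun \<alpha> x * mfun \<beta> x) = mfun (\<lambda>i. \<alpha> i + \<beta> i)"
  by (simp add: mfun_def power_add prod.distrib)

lemma span_mult:
  assumes "f \<in> F.span (MS a)" "g \<in> F.span (MS b)"
  shows "(\<lambda>x. f x * g x) \<in> F.span (MS (a + b))"
proof -
  have sub: "F.subspace {f. (\<lambda>x. f x * g x) \<in> F.span T}" for g T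
    unfolding F.subspace_def
  proof (intro conjI ballI allI)
    show "0 \<in> {f. (\<lambda>x. f x * g x) \<in> F.span T}"
      using F.span_zero by (simp add: zero_fun_def)
    fix x y assume "x \<in> {f. (\<lambda>x. f x * g x) \<in> F.span T}" "y \<in> {f. (\<lambda>x. f x * g x) \<in> F.span T}"
    then have "(\<lambda>z. x z * g z) + (\<lambda>z. y z * g z) \<in> F.span T" using F.span_add by blast
    then show "x + y \<in> {f. (\<lambda>x. f x * g x) \<in> F.span T}" by (simp add: plus_fun_def algebra_simps)
  next
    fix c x assume "x \<in> {f. (\<lambda>x. f x * g x) \<in> F.span T}"
    then have "fscale c (\<lambda>z. x z * g z) \<in> F.span T" using F.span_scale by blast
    then show "fscale c x \<in> {f. (\<lambda>x. f x * g x) \<in> F.span T}" by (simp add: fscale_def algebra_simps)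
  qed
  have base: "(\<lambda>x. m x * g x) \<in> F.span (MS (a + b))" if m: "m \<in> MS a" for m
  proof -
    have sub2: "F.subspace {g. (\<lambda>x. m x * g x) \<in> F.span (MS (a+b))}"
      using sub[of m "MS (a+b)"] by (simp add: mult.commute)
    show ?thesis using assms(2)
    proof (induction rule: F.span_induct)
      case base show ?case by (rule sub2)
    next
      case (step g')
      obtain \<alpha> where a: "m = mfun \<alpha>" "sum \<alpha> UNIV \<le> a" using m by (auto simp: MS_def)
      obtain \<beta> where b: "g' = mfun \<beta>" "sum \<beta> UNIV \<le> b" using step by (auto simp: MS_def)
      have "mfun (\<lambda>i. \<alpha> i + \<beta> i) \<in> MS (a+b)" using a b by (auto simp: MS_def sum.distrib)
      then show ?case using a b by (simp add: mono_mult F.span_base)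
    qed
  qed
  show ?thesis using assms(1)
  proof (induction rule: F.span_induct)
    case base show ?case by (rule sub)
  next
    case (step m) then show ?case using base by simp
  qed
qed

lemma pdeg_span: fixes f :: "real^'n \<Rightarrow> real" shows "pdeg k f \<Longrightarrow> f \<in> F.span (MS k)"
proof (induction rule: pdeg.induct)
  case (const k a)
  have "(mfun (\<lambda>_. 0) :: real^'n \<Rightarrow> real) \<in> MS k" by (auto simp: MS_def)
  then have "fscale a (mfun (\<lambda>_. 0) :: real^'n \<Rightarrow> real) \<in> F.span (MS k)" by (intro F.span_scale F.span_base)
  moreover have "fscale a (mfun (\<lambda>_. 0) :: real^'n \<Rightarrow> real) = (\<lambda>x. a)" by (simp add: fscale_def mfun_def)
  ultimately show ?case by metis
next
  case (coord i)
  have m: "mfun (\<lambda>j. if j = i then 1 else 0) = (\<lambda>x. x $ i)"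
    by (simp add: mfun_def fun_eq_iff if_distrib[of "\<lambda>e. _ ^ e"] prod.delta cong: if_cong)
  have "mfun (\<lambda>j. if j = i then 1 else 0) \<in> MS 1" by (auto simp: MS_def)
  then show ?case unfolding m by (rule F.span_base)
next
  case (add k f g)
  then have "f + g \<in> F.span (MS k)" using F.span_add by blast
  then show ?case by (simp add: plus_fun_def)
next
  case (mult a f b g)
  then show ?case using span_mult by blast
next
  case (mono a f b)
  then show ?case using F.span_mono[OF MS_mono] by blast
qed




lemma RG_lower:
  assumes "V \<subseteq> {g. continuous_on UNIV g}" "fsubspace V" "f \<in> V"
    "\<forall>h. \<forall>g\<in>V. tau h g \<in> V" "\<forall>P\<in>G. \<forall>g\<in>V. OP P g \<in> V"
  shows "RG G f \<subseteq> V"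
  unfolding RG_def using assms by (intro Inter_lower) simp

lemma RG_subspace: "F.subspace (RG G f)"
  unfolding RG_def by (rule F.subspace_Inter) (auto simp: fsubspace_def)

lemma RG_f: "f \<in> RG G f"
  unfolding RG_def by auto

lemma RG_tau: "g \<in> RG G f \<Longrightarrow> tau h g \<in> RG G f"
  unfolding RG_def by auto

lemma pdeg_space:
  fixes f :: "real^'n \<Rightarrow> real"
  assumes "pdeg n f"
  shows "RG G f \<subseteq> F.span (MS n)"
proof -
  let ?V = "Collect (pdeg n) :: (real^'n \<Rightarrow> real) set"
  have "RG G f \<subseteq> ?V"
  proof (rule RG_lower)
    show "?V \<subseteq> {g. continuous_on UNIV g}" using pdeg_cont by blast
    show "f \<in> ?V" using assms by simp
    show "fsubspace (?V)" unfolding fsubspace_def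
    proof (rule F.subspaceI)
      show "0 \<in> ?V" using pdeg.const[of n 0] by (simp add: zero_fun_def)
      fix x y :: "real^'n \<Rightarrow> real" assume "x \<in> ?V" "y \<in> ?V"
      then show "x + y \<in> ?V" using pdeg.add[of n x y] by (simp add: plus_fun_def)
    next
      fix c and x :: "real^'n \<Rightarrow> real" assume "x \<in> ?V"
      then show "fscale c x \<in> ?V"
        using pdeg.mult[OF pdeg.const[of 0 c], of n x] by (simp add: fscale_def)
    qed
    show "\<forall>h. \<forall>g\<in>?V. tau h g \<in> ?V"
      using pdeg_affine[of n _ "mat 1"] by (simp add: tau_def) blast
    show "\<forall>P\<in>G. \<forall>g\<in>?V. OP P g \<in> ?V"
      using pdeg_affine[of n _ _ 0] by (simp add: OP_def) blast
  qed
  also have "\<dots> \<subseteq> F.span (MS n)" using pdeg_span by blast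
  finally show ?thesis .
qed

lemma MS_card: "finite (MS n :: (real^'n \<Rightarrow> real) set) \<and> card (MS n :: (real^'n \<Rightarrow> real) set) \<le> (n+1) ^ CARD('n)"
proof -
  have sub: "{\<alpha>::'n\<Rightarrow>nat. sum \<alpha> UNIV \<le> n} \<subseteq> PiE UNIV (\<lambda>_. {..n})"
  proof
    fix \<alpha> :: "'n \<Rightarrow> nat" assume "\<alpha> \<in> {\<alpha>. sum \<alpha> UNIV \<le> n}"
    then have "\<alpha> i \<le> n" for i using member_le_sum[of i UNIV \<alpha>] by auto
    then show "\<alpha> \<in> PiE UNIV (\<lambda>_. {..n})" by (auto simp: PiE_def)
  qed
  have fP: "finite (PiE (UNIV::'n set) (\<lambda>_. {..n}))" by (simp add: finite_PiE)
  have cP: "card (PiE (UNIV::'n set) (\<lambda>_. {..n})) = (n+1) ^ CARD('n)" by (simp add: card_PiE)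
  have "MS n \<subseteq> (mfun ` PiE UNIV (\<lambda>_. {..n}) :: (real^'n \<Rightarrow> real) set)"
    using sub by (auto simp: MS_def)
  moreover have "card (mfun ` PiE UNIV (\<lambda>_. {..n}) :: (real^'n \<Rightarrow> real) set) \<le> (n+1) ^ CARD('n)"
    using card_image_le[OF fP, of mfun] cP by simp
  ultimately show ?thesis using fP
    by (meson card_mono finite_imageI finite_subset order_trans)
qed

lemma fact_ineq: "(n+1) ^ d * fact n \<le> (fact (n + d) :: nat)"
proof (induction d)
  case (Suc d)
  have "(n+1) ^ Suc d * fact n = (n+1) * ((n+1)^d * fact n)" by (simp add: algebra_simps)
  also have "\<dots> \<le> (n + Suc d) * fact (n + d)" using Suc by (intro mult_mono) auto
  also have "\<dots> = fact (n + Suc d)" by simp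
  finally show ?case .
qed simp

lemma binom_ineq: "(n+1) ^ d \<le> fact d * ((n + d) choose d)"
proof -
  have "fact d * fact n * ((n + d) choose d) = (fact (n + d) :: nat)"
    using binomial_fact_lemma[of d "n+d"] by simp
  then have "(n+1) ^ d * fact n \<le> fact d * ((n + d) choose d) * fact n"
    using fact_ineq[of n d] by (simp add: algebra_simps)
  then show ?thesis by simp
qed




theorem mainTheorem8:
  fixes G :: "(real^'n^'n) set" and c :: "('n \<Rightarrow> nat) \<Rightarrow> real" and n :: nat
  assumes "GL_subgroup G"
    and "poly_coeffs c" and "\<exists>\<alpha>. c \<alpha> \<noteq> 0"
    and "total_degree c = n"
  shows "(\<exists>B. finite B \<and> fspan B = RG G (poly_fun c))
    \<and> root CARD('n) (real (fdim (RG G (poly_fun c)))) - 1 \<le> real n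
    \<and> real n \<le> real (fdim (RG G (poly_fun c))) - 1
    \<and> (fdim (RG G (poly_fun c)) = (n + CARD('n)) choose CARD('n) \<longrightarrow>
        real n \<le> root CARD('n) (fact CARD('n) * real (fdim (RG G (poly_fun c)))) - 1)"
proof -
  define f where "f = poly_fun c"
  define R where "R = RG G f"
  define supp where "supp = {\<alpha>. c \<alpha> \<noteq> 0}"
  define d where "d = CARD('n)"
  have d0: "0 < d" by (simp add: d_def)
  have fsupp: "finite supp" using assms(2) by (simp add: poly_coeffs_def supp_def)
  have Tdef: "{(\<Sum>i\<in>UNIV. \<alpha> i) | \<alpha>. c \<alpha> \<noteq> 0} = (\<lambda>\<alpha>. sum \<alpha> UNIV) ` supp"
    by (auto simp: supp_def)
  have Tfin: "finite ((\<lambda>\<alpha>. sum \<alpha> UNIV) ` supp)" using fsupp by simp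
  have Tne: "(\<lambda>\<alpha>. sum \<alpha> UNIV) ` supp \<noteq> {}" using assms(3) by (auto simp: supp_def)
  have nmax: "n = Max ((\<lambda>\<alpha>. sum \<alpha> UNIV) ` supp)" using assms(4) Tdef by (simp add: total_degree_def)
  have le_n: "\<alpha> \<in> supp \<Longrightarrow> sum \<alpha> UNIV \<le> n" for \<alpha> using nmax Tfin by simp
  obtain \<alpha>0 where a0: "\<alpha>0 \<in> supp" "sum \<alpha>0 UNIV = n"
    using Max_in[OF Tfin Tne] nmax by auto
  have f_eq: "f = (\<lambda>x. \<Sum>\<alpha>\<in>supp. c \<alpha> * mfun \<alpha> x)"
    unfolding f_def by (rule ext) (simp add: poly_fun_def supp_def mfun_def)
  have pdeg_f: "pdeg n f" unfolding f_eq
  proof (rule pdeg_sum[OF fsupp], rule ballI)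
    fix \<alpha> assume a: "\<alpha> \<in> supp"
    have "pdeg (0 + sum \<alpha> UNIV) (\<lambda>x. c \<alpha> * mfun \<alpha> x)"
      by (rule pdeg.mult[OF pdeg.const pdeg_mono])
    then show "pdeg n (\<lambda>x. c \<alpha> * mfun \<alpha> x)" using le_n[OF a] pdeg.mono by auto
  qed
  have Rsub: "F.subspace R" by (simp add: R_def RG_subspace)
  have Rspan: "R \<subseteq> F.span (MS n)" unfolding R_def by (rule pdeg_space[OF pdeg_f])
  have MS: "finite (MS n :: (real^'n \<Rightarrow> real) set)" "card (MS n :: (real^'n \<Rightarrow> real) set) \<le> (n+1) ^ d"
    using MS_card[where 'n='n, of n] by (auto simp: d_def)
  have dim_up: "F.dim R \<le> (n+1) ^ d"
    using F.dim_le_card[OF Rspan MS(1)] MS(2) by simp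
  obtain B where B: "B \<subseteq> R" "F.independent B" "R \<subseteq> F.span B" "card B = F.dim R"
    using F.basis_exists by blast
  have finB: "finite B" using F.independent_span_bound[OF MS(1) B(2)] B(1) Rspan by blast
  have spanB: "F.span B = R" using B(1,3) F.span_minimal[OF B(1) Rsub] by blast
  have part1: "\<exists>B. finite B \<and> fspan B = R" using finB spanB by (auto simp: fspan_def)
  define S where "S = {\<alpha>\<in>supp. sum \<alpha> UNIV = n}"
  define H where "H h = (\<Sum>\<alpha>\<in>S. c \<alpha> * (\<Prod>i\<in>UNIV. (h $ i) ^ \<alpha> i))" for h :: "real^'n"
  have fS: "finite S" using fsupp by (simp add: S_def)
  obtain h where Hh: "H h \<noteq> 0"
  proof -
    have "\<exists>h. H h \<noteq> 0"
    proof (rule ccontr)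
      assume "\<not> (\<exists>h. H h \<noteq> 0)"
      then have H0: "H h = 0" for h by simp
      have "c \<alpha>0 = 0"
      proof (rule poly_ident[of UNIV S c \<alpha>0])
        show "\<forall>x::'n\<Rightarrow>real. (\<Sum>\<alpha>\<in>S. c \<alpha> * (\<Prod>i\<in>UNIV. x i ^ \<alpha> i)) = 0"
          using H0[of "vec_lambda _"] by (simp add: H_def)
      qed (use fS a0 in \<open>auto simp: S_def\<close>)
      then show False using a0 by (simp add: supp_def)
    qed
    then show thesis using that by blast
  qed
  define p where "p = (\<Sum>\<alpha>\<in>supp. monom (c \<alpha> * (\<Prod>i\<in>UNIV. (h $ i) ^ \<alpha> i)) (sum \<alpha> UNIV))"
  have poly_p: "poly p s = f (s *\<^sub>R h)" for s
  proof -
    have "poly p s = (\<Sum>\<alpha>\<in>supp. c \<alpha> * (\<Prod>i\<in>UNIV. (h $ i) ^ \<alpha> i) * s ^ sum \<alpha> UNIV)"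
      by (simp add: p_def poly_sum poly_monom)
    also have "\<dots> = (\<Sum>\<alpha>\<in>supp. c \<alpha> * mfun \<alpha> (s *\<^sub>R h))"
      by (intro sum.cong refl)
         (simp add: mfun_def power_mult_distrib prod.distrib power_sum algebra_simps)
    also have "\<dots> = f (s *\<^sub>R h)" by (simp add: f_eq)
    finally show ?thesis .
  qed
  have cp: "coeff p j = (\<Sum>\<alpha>\<in>supp. if sum \<alpha> UNIV = j then c \<alpha> * (\<Prod>i\<in>UNIV. (h $ i) ^ \<alpha> i) else 0)" for j
    by (simp add: p_def coeff_sum)
  have "coeff p n = H h"
    unfolding cp H_def S_def using fsupp by (simp add: sum.inter_filter eq_commute)
  then have cpn: "coeff p n \<noteq> 0" using Hh by simp
  have "coeff p j = 0" if "j > n" for j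
    unfolding cp using le_n that by (intro sum.neutral) force
  then have degp: "degree p = n" using cpn by (meson le_antisym degree_le le_degree)
  define D where "D q = pcompose q [:1,1:] - q" for q :: "real poly"
  define qk where "qk k = (D ^^ k) p" for k
  have qk: "k \<le> n \<Longrightarrow> qk k \<noteq> 0 \<and> degree (qk k) = n - k" for k
  proof (induction k)
    case 0 then show ?case using degp cpn by (auto simp: qk_def)
  next
    case (Suc k)
    then have IH: "qk k \<noteq> 0" "degree (qk k) = n - k" by auto
    have "degree (qk k) \<ge> 1" using IH Suc.prems by simp
    from delta_deg[OF this] have
      "degree (D (qk k)) = n - k - 1" "lead_coeff (D (qk k)) = of_nat (n - k) * lead_coeff (qk k)"
      using IH by (auto simp: D_def)
    moreover have "lead_coeff (qk k) \<noteq> 0" using IH(1) by (metis leading_coeff_0_iff)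
    moreover have "real (n - k) \<noteq> 0" using Suc.prems by simp
    ultimately show ?case by (auto simp: qk_def)
  qed
  define gk where "gk k = ((\<lambda>g. tau h g - g) ^^ k) f" for k
  have gkR: "gk k \<in> R" for k
  proof (induction k)
    case 0 then show ?case by (simp add: gk_def R_def RG_f)
  next
    case (Suc k)
    have "tau h (gk k) \<in> R" using Suc by (simp add: R_def RG_tau)
    then have m: "tau h (gk k) - gk k \<in> R" using F.subspace_diff[OF Rsub] Suc by blast
    have e: "gk (Suc k) = tau h (gk k) - gk k" unfolding gk_def by simp
    show ?case using m e by metis
  qed
  have gk_eval: "gk k (s *\<^sub>R h) = poly (qk k) s" for k s
  proof (induction k arbitrary: s)
    case 0 then show ?case by (simp add: gk_def qk_def poly_p)
  next
    case (Suc k)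
    have "gk (Suc k) (s *\<^sub>R h) = gk k (s *\<^sub>R h + h) - gk k (s *\<^sub>R h)"
      by (simp add: gk_def tau_def)
    also have "s *\<^sub>R h + h = (s + 1) *\<^sub>R h" by (simp add: algebra_simps)
    also have "gk k ((s + 1) *\<^sub>R h) - gk k (s *\<^sub>R h) = poly (qk (Suc k)) s"
    proof -
      have a: "gk k ((s+1) *\<^sub>R h) = poly (qk k) (s+1)" by (rule Suc.IH)
      have b: "gk k (s *\<^sub>R h) = poly (qk k) s" by (rule Suc.IH)
      have c: "poly (qk (Suc k)) s = poly (qk k) (s+1) - poly (qk k) s"
        by (simp add: qk_def D_def poly_pcompose add.commute)
      show ?thesis by (simp only: a b c)
    qed
    finally show ?case .
  qed
  have inj: "inj_on gk {..n}"
  proof (rule inj_onI)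
    fix a b assume ab: "a \<in> {..n}" "b \<in> {..n}" "gk a = gk b"
    then have "poly (qk a) = poly (qk b)" using gk_eval by (metis ext)
    then have "qk a = qk b" by (simp add: poly_eq_poly_eq_iff)
    then have "n - a = n - b" using qk ab(1,2) by (metis atMost_iff)
    then show "a = b" using ab(1,2) by simp
  qed
  define BB where "BB = gk ` {..n}"
  have cardBB: "card BB = n + 1" using card_image[OF inj] by (simp add: BB_def)
  have BBR: "BB \<subseteq> R" using gkR by (auto simp: BB_def)
  have indBB: "F.independent BB"
  proof (rule F.independent_if_scalars_zero)
    show "finite BB" by (simp add: BB_def)
    fix u :: "(real^'n \<Rightarrow> real) \<Rightarrow> real" and x
    assume sum0: "(\<Sum>x\<in>BB. fscale (u x) x) = 0" and x: "x \<in> BB"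
    have "(\<Sum>k\<in>{..n}. fscale (u (gk k)) (gk k)) = 0"
      using sum0 sum.reindex[OF inj, of "\<lambda>x. fscale (u x) x"] by (simp add: BB_def)
    then have z: "(\<Sum>k\<in>{..n}. u (gk k) * poly (qk k) s) = 0" for s
    proof -
      assume hs: "(\<Sum>k\<in>{..n}. fscale (u (gk k)) (gk k)) = 0"
      have "(\<Sum>k\<in>{..n}. fscale (u (gk k)) (gk k)) (s *\<^sub>R h) = 0" using hs by simp
      then show ?thesis by (simp add: sum_fun_apply fscale_def gk_eval)
    qed
    define q' where "q' j = qk (n - j)" for j
    have z': "(\<Sum>j\<in>{..<Suc n}. u (gk (n - j)) * poly (q' j) s) = 0" for s
    proof -
      have "(\<Sum>j\<in>{..<Suc n}. u (gk (n - j)) * poly (q' j) s)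
          = (\<Sum>j\<in>{..<Suc n}. (\<lambda>k. u (gk k) * poly (qk k) s) (Suc n - Suc j))"
        by (simp add: q'_def)
      also have "\<dots> = (\<Sum>k\<in>{..<Suc n}. u (gk k) * poly (qk k) s)" by (rule sum.nat_diff_reindex)
      also have "\<dots> = 0" using z lessThan_Suc_atMost by simp
      finally show ?thesis .
    qed
    have "\<forall>j\<in>{..<Suc n}. u (gk (n - j)) = 0"
      by (rule uni_indep[of _ q']) (use z' qk in \<open>auto simp: q'_def\<close>)
    moreover obtain k where k: "k \<le> n" "x = gk k" using x by (auto simp: BB_def)
    moreover have "n - k \<in> {..<Suc n}" by simp
    ultimately have "u (gk (n - (n - k))) = 0" by blast
    then show "u x = 0" using k by simp
  qed
  have dim_lo: "n + 1 \<le> F.dim R" using F.independent_span_bound[OF finB indBB] BBR B(3,4) cardBB by auto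
  have fdim: "fdim (RG G (poly_fun c)) = F.dim R" by (simp add: fdim_def R_def f_def)
  have up: "root d (real (F.dim R)) \<le> real n + 1"
  proof -
    have "real (F.dim R) \<le> real ((n + 1) ^ d)" using dim_up by (simp only: of_nat_le_iff)
    then have "real (F.dim R) \<le> (real n + 1) ^ d" by (simp add: add.commute)
    then have "root d (real (F.dim R)) \<le> root d ((real n + 1) ^ d)" using d0 by simp
    also have "\<dots> = real n + 1" using d0 by (simp add: real_root_pos2)
    finally show ?thesis .
  qed
  have last: "real n \<le> root d (fact d * real (F.dim R)) - 1" if eq: "F.dim R = (n + d) choose d"
  proof -
    have "(n+1)^d \<le> fact d * F.dim R" using binom_ineq[of n d] eq by simp
    then have "real ((n+1)^d) \<le> real (fact d * F.dim R)" by (simp only: of_nat_le_iff)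
    then have "(real n + 1) ^ d \<le> fact d * real (F.dim R)" by (simp add: add.commute)
    then have "root d ((real n + 1) ^ d) \<le> root d (fact d * real (F.dim R))" using d0 by simp
    moreover have "root d ((real n + 1) ^ d) = real n + 1" using d0 by (simp add: real_root_pos2)
    ultimately show ?thesis by simp
  qed
  show ?thesis
    using part1 up dim_lo last unfolding fdim by (auto simp: R_def f_def d_def)
qed


end
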